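(* Let $X$ be an infinite-dimensional separable (real or complex) Banach space and let $A$ be an operator in $X$ satisfying all hypotheses of Theorem 2.1: $A$ is densely defined, $A^r$ is closed for all $r\ge1$, and there are a dense set $X_0\subset\bigcap_n D(A^n)$ and $B:X_0\to X_0$ with $ABx=x$, and $\sum_{n\ge1}A^nx$, $\sum_{n\ge1}B^nx$ unconditionally convergent for all $x\in X_0$. If $A$ is injective and $A^{-1}$ is a bounded linear operator on $X$, then $A^{-1}$ is frequently hypercyclic.
   Context: A series $\sum_k x_k$ converges unconditionally if for every $\varepsilon>0$ there is $N$ with $\|\sum_{k\in F}x_k\|<\varepsilon$ for every finite $F\subset\mathbb{N}$ disjoint from $\{1,\dots,N\}$. An operator $T$ is frequently hypercyclic if there is $f\in D(T)$ with $T^nf\in D(T)$ for all $n\ge1$ such that for every non-empty open $U\subset X$ the set $\{n: T^nf\in U\}$ has positive lower density, where the lower density of $E\subset\mathbb{N}$ is $\liminf_{N}\#(E\cap\{1,\dots,N\})/N$. *)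

theory Defs
  imports "HOL-Analysis.Analysis"
begin

text \<open>An (unbounded) operator in X is a pair (D, A): a linear subspace D = D(A)
  of X and a map A that is linear on D (values outside D are irrelevant).\<close>

definition linear_operator_on :: "'a::real_vector set \<Rightarrow> ('a \<Rightarrow> 'a) \<Rightarrow> bool" where
  "linear_operator_on D A \<longleftrightarrow> subspace D \<and>
     (\<forall>x\<in>D. \<forall>y\<in>D. A (x + y) = A x + A y) \<and>
     (\<forall>c. \<forall>x\<in>D. A (c *\<^sub>R x) = c *\<^sub>R A x)"

fun dom_pow :: "'a set \<Rightarrow> ('a \<Rightarrow> 'a) \<Rightarrow> nat \<Rightarrow> 'a set" where
  "dom_pow D A 0 = UNIV"
| "dom_pow D A (Suc n) = {x \<in> dom_pow D A n. (A ^^ n) x \<in> D}"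

definition closed_power :: "'a::topological_space set \<Rightarrow> ('a \<Rightarrow> 'a) \<Rightarrow> nat \<Rightarrow> bool" where
  "closed_power D A r \<longleftrightarrow> closed {(x, (A ^^ r) x) | x. x \<in> dom_pow D A r}"

text \<open>Unconditional convergence of the series \<Sum>_{k\<ge>1} x_k (index 0 is never used,
  since F disjoint from {1..N} with F \<subseteq> {1,2,...} means F \<subseteq> {N<..}).\<close>

definition unconditionally_convergent :: "(nat \<Rightarrow> 'a::real_normed_vector) \<Rightarrow> bool" where
  "unconditionally_convergent x \<longleftrightarrow>
     (\<forall>\<epsilon>>0. \<exists>N::nat. \<forall>F. finite F \<and> F \<subseteq> {N<..} \<longrightarrow> norm (\<Sum>k\<in>F. x k) < \<epsilon>)"

definition lower_density :: "nat set \<Rightarrow> ereal" where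
  "lower_density E = liminf (\<lambda>N. ereal (real (card (E \<inter> {1..N})) / real N))"

definition frequently_hypercyclic :: "'a::topological_space set \<Rightarrow> ('a \<Rightarrow> 'a) \<Rightarrow> bool" where
  "frequently_hypercyclic D T \<longleftrightarrow>
     (\<exists>f\<in>D. (\<forall>n\<ge>1. (T ^^ n) f \<in> D) \<and>
        (\<forall>U. open U \<and> U \<noteq> {} \<longrightarrow> lower_density {n. (T ^^ n) f \<in> U} > 0))"

end

theory Submission
  imports Defs
begin


definition ndist :: "nat \<Rightarrow> nat \<Rightarrow> nat" where "ndist a b = (a - b) + (b - a)"

fun Pseq :: "(nat \<Rightarrow> nat) \<Rightarrow> nat \<Rightarrow> nat" where
  "Pseq r 0 = 32 * (2 * r 0 + 1)"
| "Pseq r (Suc k) = 2 * Pseq r k * (2 * r (Suc k) + 1) * 2^(k+6)"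

definition Vset :: "nat \<Rightarrow> nat set" where "Vset P = {n. n mod (2*P) = P}"

definition Eset :: "(nat \<Rightarrow> nat) \<Rightarrow> nat \<Rightarrow> nat set" where
 "Eset r l = {n. n \<in> Vset (Pseq r l) \<and> (\<forall>k>l. \<forall>m \<in> Vset (Pseq r k). r k < ndist n m)}"

lemma Pseq_Suc_eq: "Pseq r (Suc k) = 2 * (2^(k+6) * (2 * r (Suc k) + 1) * Pseq r k)"
  by (simp only: Pseq.simps mult.assoc mult.commute mult.left_commute)

lemma Pseq_ge: "2^(k+5) * (2 * r k + 1) \<le> Pseq r k"
proof (induction k)
  case 0 then show ?case by simp
next
  case (Suc k)
  have "(1::nat) \<le> 2^(k+5) * (2 * r k + 1)" by (simp add: Suc_le_eq)
  then have P1: "1 \<le> Pseq r k" using Suc by linarith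
  have "(2^(k+6) * (2 * r (Suc k) + 1)) * 1 \<le> (2^(k+6) * (2 * r (Suc k) + 1)) * (2 * Pseq r k)"
    by (rule mult_le_mono2) (use P1 in simp)
  moreover have "(2^(k+6) * (2 * r (Suc k) + 1)) * (2 * Pseq r k) = Pseq r (Suc k)"
    unfolding Pseq_Suc_eq by (simp only: mult.assoc mult.commute mult.left_commute)
  ultimately have H: "2^(k+6) * (2 * r (Suc k) + 1) \<le> Pseq r (Suc k)" by (metis mult.right_neutral)
  have e: "Suc k + 5 = k + 6" by simp
  show ?case unfolding e by (rule H)
qed

lemma Pseq_pos: "0 < Pseq r k"
proof -
  have "0 < 2^(k+5) * (2 * r k + 1)" by simp
  then show ?thesis using Pseq_ge[of k r] by linarith
qed

lemma Pseq_gt_r: "2 * r k < Pseq r k"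
proof -
  have a: "(1::nat) \<le> 2^(k+5)" by simp
  have "1 * (2 * r k + 1) \<le> 2^(k+5) * (2 * r k + 1)" by (rule mult_le_mono1[OF a])
  then have "2 * r k < 2^(k+5) * (2 * r k + 1)" by simp
  then show ?thesis using Pseq_ge[of k r] by linarith
qed

lemma Pseq_gt_kr: "k + r k < Pseq r k"
proof -
  have "k < 2^k" by (rule less_exp)
  also have "(2::nat)^k \<le> 2^(k+5)" by (rule power_increasing) auto
  finally have k1: "k + 1 \<le> 2^(k+5)" by simp
  have a: "(1::nat) \<le> 2^(k+5)" by simp
  have "1 * (2 * r k) \<le> 2^(k+5) * (2 * r k)" by (rule mult_le_mono1[OF a])
  moreover have "2^(k+5) * (2 * r k + 1) = 2^(k+5) * (2 * r k) + 2^(k+5)" by (simp add: distrib_left)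
  ultimately have "k + 1 + 2 * r k \<le> 2^(k+5) * (2 * r k + 1)" using k1 by linarith
  then show ?thesis using Pseq_ge[of k r] by linarith
qed

lemma Pseq_Suc_ge: "2^(k+6) * (2 * r (Suc k) + 1) * Pseq r k \<le> Pseq r (Suc k)"
  unfolding Pseq_Suc_eq by simp

lemma Pseq_step: "Pseq r k \<le> Pseq r (Suc k)"
proof -
  have "(1::nat) \<le> 2^(k+6) * (2 * r (Suc k) + 1)" by (simp add: Suc_le_eq)
  then have "1 * Pseq r k \<le> 2^(k+6) * (2 * r (Suc k) + 1) * Pseq r k" by (rule mult_le_mono1)
  then show ?thesis using Pseq_Suc_ge[of k r] by linarith
qed

lemma Pseq_mono: "l \<le> k \<Longrightarrow> Pseq r l \<le> Pseq r k"
  using Pseq_step by (metis lift_Suc_mono_le)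

lemma Pseq_dvd: "l < k \<Longrightarrow> 2 * Pseq r l dvd Pseq r k"
proof (induction k)
  case 0 then show ?case by simp
next
  case (Suc k)
  have d: "Pseq r k dvd Pseq r (Suc k)" by simp
  show ?case
  proof (cases "l = k")
    case True then show ?thesis by simp
  next
    case False then have "2 * Pseq r l dvd Pseq r k" using Suc by simp
    then show ?thesis using d dvd_trans by blast
  qed
qed

lemma Vset_ge: "n \<in> Vset P \<Longrightarrow> P \<le> n"
  unfolding Vset_def by (metis mem_Collect_eq mod_less_eq_dividend)

lemma Vset_sep: assumes "n \<in> Vset P" "m \<in> Vset P" "n < m" shows "2*P \<le> m - n"
proof -
  have "m mod (2*P) = n mod (2*P)" using assms unfolding Vset_def by simp
  then have "2*P dvd m - n" using assms(3) by (simp add: mod_eq_dvd_iff_nat)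
  then show ?thesis using assms(3) by (simp add: dvd_imp_le)
qed

lemma Eset_gt: "n \<in> Eset r l \<Longrightarrow> l < n \<and> r l < n"
  unfolding Eset_def using Vset_ge Pseq_gt_kr[of l r] by fastforce

lemma Eset_disj: "l \<noteq> k \<Longrightarrow> Eset r l \<inter> Eset r k = {}"
proof -
  have *: "Eset r l \<inter> Eset r k = {}" if "l < k" for l k
    using that unfolding Eset_def ndist_def by fastforce
  assume "l \<noteq> k" then show ?thesis using *[of l k] *[of k l]
    by (metis inf_commute linorder_neqE_nat)
qed

lemma Eset_sep: assumes "n \<in> Eset r l" "m \<in> Eset r k" "m < n" shows "r (max l k) < n - m"
proof -
  consider (less) "l < k" | (greater) "k < l" | (equal) "l = k" by linarith
  then show ?thesis
  proof cases
  case less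
  then have "r k < ndist n m" using assms unfolding Eset_def by blast
  then show ?thesis using less assms(3) by (simp add: ndist_def max_def)
next
  case greater
  then have "r l < ndist m n" using assms unfolding Eset_def by blast
  then show ?thesis using greater assms(3) by (simp add: ndist_def max_def)
next
  case equal
  then have "2 * Pseq r l \<le> n - m" using assms Vset_sep unfolding Eset_def by blast
  then show ?thesis using Pseq_gt_r[where r=r and k=l] equal by simp
qed
qed

lemma card_V_lower: assumes "0 < P" shows "real N / (2*P) - 1 \<le> real (card (Vset P \<inter> {1..N}))"
proof -
  define c where "c = (N+P) div (2*P)"
  have sub: "(\<lambda>j. P + 2*P*j) ` {..<c} \<subseteq> Vset P \<inter> {1..N}"
  proof
    fix n assume "n \<in> (\<lambda>j. P + 2*P*j) ` {..<c}"
    then obtain j where j: "j < c" "n = P + 2*P*j" by auto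
    have "(j+1) * (2*P) \<le> c * (2*P)" using j by (intro mult_le_mono1) simp
    also have "c * (2*P) \<le> N + P" unfolding c_def by (rule div_times_less_eq_dividend)
    finally have "n \<le> N" using j by (simp add: algebra_simps)
    moreover have "n mod (2*P) = P" using j assms by simp
    ultimately show "n \<in> Vset P \<inter> {1..N}" using assms j unfolding Vset_def by auto
  qed
  have inj: "inj_on (\<lambda>j. P + 2*P*j) {..<c}" using assms by (auto simp: inj_on_def)
  have cle: "c \<le> card (Vset P \<inter> {1..N})"
    using card_mono[OF _ sub] card_image[OF inj] by simp
  have "N + P < (c+1) * (2*P)"
  proof -
    have "N + P = c * (2*P) + (N+P) mod (2*P)" unfolding c_def by (rule div_mult_mod_eq[symmetric])
    moreover have "(N+P) mod (2*P) < 2*P" using assms by simp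
    ultimately show ?thesis by (simp add: algebra_simps)
  qed
  then have "real N < (real c + 1) * (2 * real P)"
    by (metis (mono_tags, lifting) add_lessD1 of_nat_1 of_nat_add of_nat_less_iff of_nat_mult of_nat_numeral)
  then have "real N / (2*P) < real c + 1" using assms by (simp add: divide_less_eq)
  then show ?thesis using cle by linarith
qed

lemma card_V_upper: assumes "0 < P" shows "card (Vset P \<inter> {1..M}) * P \<le> M"
proof -
  define c where "c = (M+P) div (2*P)"
  have sub: "Vset P \<inter> {1..M} \<subseteq> (\<lambda>j. P + 2*P*j) ` {..<c}"
  proof
    fix n assume n: "n \<in> Vset P \<inter> {1..M}"
    define j where "j = n div (2*P)"
    have "n = n div (2*P) * (2*P) + n mod (2*P)" by (rule div_mult_mod_eq[symmetric])
    then have nj: "n = P + 2*P*j" using n unfolding Vset_def j_def by (simp add: algebra_simps)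
    have "(j+1)*(2*P) \<le> M + P" using nj n by (simp add: algebra_simps)
    then have "j + 1 \<le> c" unfolding c_def using assms by (simp add: less_eq_div_iff_mult_less_eq)
    then show "n \<in> (\<lambda>j. P + 2*P*j) ` {..<c}" using nj by auto
  qed
  have "card (Vset P \<inter> {1..M}) \<le> card ((\<lambda>j. P + 2*P*j) ` {..<c})"
    by (rule card_mono[OF _ sub]) simp
  also have "\<dots> \<le> c" using card_image_le[of "{..<c}" "\<lambda>j. P + 2*P*j"] by simp
  finally have cc: "card (Vset P \<inter> {1..M}) \<le> c" .
  have "c * P \<le> M"
  proof (cases "c = 0")
    case True then show ?thesis by simp
  next
    case False
    have "c * (2*P) \<le> M + P" unfolding c_def by (rule div_times_less_eq_dividend)
    moreover have "P \<le> c * P" using False by simp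
    moreover have "c * (2*P) = c * P + c * P" by simp
    ultimately show ?thesis by linarith
  qed
  then show ?thesis using cc by (meson le_trans mult_le_mono1)
qed

lemma geom_le: "finite I \<Longrightarrow> (\<Sum>k\<in>I. (1/2::real)^k) \<le> 2"
proof -
  assume "finite I"
  have "(\<Sum>k\<in>I. (1/2::real)^k) \<le> (\<Sum>k. (1/2::real)^k)"
    by (rule sum_le_suminf) (use \<open>finite I\<close> in auto)
  also have "\<dots> = 2" by (subst suminf_geometric) auto
  finally show ?thesis .
qed

lemma Eset_density: "\<exists>c>0. eventually (\<lambda>N. c * real N \<le> real (card (Eset r l \<inter> {1..N}))) sequentially"
proof -
  define P where "P = Pseq r l"
  have P0: "0 < P" unfolding P_def by (rule Pseq_pos)
  define W where "W k N = (\<Union>m\<in>Vset (Pseq r k) \<inter> {1..N + r k}. {m - r k .. m + r k})" for k N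
  define Bad where "Bad N = (\<Union>k\<in>{l<..N}. W k N)" for N
  have finW: "finite (W k N)" for k N unfolding W_def by simp
  have finB: "finite (Bad N)" for N unfolding Bad_def using finW by simp
  have sub: "(Vset P \<inter> {1..N}) - Bad N \<subseteq> Eset r l \<inter> {1..N}" for N
  proof
    fix n assume n: "n \<in> (Vset P \<inter> {1..N}) - Bad N"
    have "r k < ndist n m" if "l < k" "m \<in> Vset (Pseq r k)" for k m
    proof (rule ccontr)
      assume "\<not> r k < ndist n m"
      then have d: "ndist n m \<le> r k" by simp
      have m1: "Pseq r k \<le> m" using that(2) by (rule Vset_ge)
      have mN: "m \<le> N + r k" using d n unfolding ndist_def by auto
      have "k + r k < Pseq r k" by (rule Pseq_gt_kr)
      then have kN: "k \<le> N" using m1 mN by linarith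
      have "1 \<le> m" using m1 Pseq_pos[of r k] by linarith
      then have "n \<in> W k N" unfolding W_def using d mN that(2) unfolding ndist_def by force
      then have "n \<in> Bad N" unfolding Bad_def using that(1) kN by auto
      then show False using n by blast
    qed
    then show "n \<in> Eset r l \<inter> {1..N}" using n unfolding Eset_def P_def by auto
  qed
  have cardW: "card (W k N) * 2^(k+5) * P \<le> 2 * N" if lk: "l < k" for k N
  proof -
    define S where "S = Vset (Pseq r k) \<inter> {1..N + r k}"
    have "card (W k N) \<le> (\<Sum>m\<in>S. card {m - r k .. m + r k})" unfolding W_def S_def by (rule card_UN_le) simp
    also have "\<dots> \<le> (\<Sum>m\<in>S. 2 * r k + 1)" by (rule sum_mono) simp
    also have "\<dots> = card S * (2 * r k + 1)" by simp
    finally have cW: "card (W k N) \<le> card S * (2 * r k + 1)" .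
    have cS: "card S * Pseq r k \<le> N + r k" unfolding S_def by (rule card_V_upper[OF Pseq_pos])
    have cS2: "card S * Pseq r k \<le> 2 * N"
    proof (cases "card S = 0")
      case True then show ?thesis by simp
    next
      case False
      then have "Pseq r k \<le> card S * Pseq r k" by simp
      then have "Pseq r k \<le> N + r k" using cS by linarith
      moreover have "2 * r k < Pseq r k" by (rule Pseq_gt_r)
      ultimately have "r k \<le> N" by linarith
      then show ?thesis using cS by linarith
    qed
    obtain k' where k': "k = Suc k'" using lk by (cases k) auto
    have "l \<le> k'" using lk k' by simp
    then have "P \<le> Pseq r k'" unfolding P_def by (rule Pseq_mono)
    then have "2^(k'+6) * (2 * r (Suc k') + 1) * P \<le> 2^(k'+6) * (2 * r (Suc k') + 1) * Pseq r k'"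
      by (rule mult_le_mono2)
    also have "\<dots> \<le> Pseq r (Suc k')" by (rule Pseq_Suc_ge)
    finally have kk: "2^(k'+6) * (2 * r (Suc k') + 1) * P \<le> Pseq r (Suc k')" .
    have e: "k + 5 = k' + 6" using k' by simp
    have key: "2^(k+5) * (2 * r k + 1) * P \<le> Pseq r k" unfolding e unfolding k' by (rule kk)
    have "card (W k N) * 2^(k+5) * P \<le> card S * (2 * r k + 1) * 2^(k+5) * P"
      by (intro mult_le_mono1) (rule cW)
    also have "\<dots> = card S * (2^(k+5) * (2 * r k + 1) * P)"
      by (simp only: mult.assoc mult.commute mult.left_commute)
    also have "\<dots> \<le> card S * Pseq r k" by (rule mult_le_mono2) (rule key)
    also have "\<dots> \<le> 2 * N" by (rule cS2)
    finally show ?thesis .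
  qed
  have cardWr: "real (card (W k N)) \<le> real N / (16 * P) * (1/2)^k" if "l < k" for k N
  proof -
    have "real (card (W k N) * 2^(k+5) * P) \<le> real (2 * N)" using cardW[OF that] by (rule of_nat_mono)
    then have "real (card (W k N)) * (2^(k+5) * P) \<le> 2 * N" by (simp add: mult.assoc)
    then have "real (card (W k N)) \<le> 2 * N / (2^(k+5) * P)" using P0 by (simp add: pos_le_divide_eq)
    also have "\<dots> = real N / (16 * P) * (1/2)^k" by (simp add: power_add power_one_over field_simps)
    finally show ?thesis .
  qed
  have cardB: "real (card (Bad N)) \<le> real N / (8 * P)" for N
  proof -
    have "card (Bad N) \<le> (\<Sum>k\<in>{l<..N}. card (W k N))" unfolding Bad_def by (rule card_UN_le) simp
    then have "real (card (Bad N)) \<le> (\<Sum>k\<in>{l<..N}. real (card (W k N)))"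
      by (metis of_nat_mono of_nat_sum)
    also have "\<dots> \<le> (\<Sum>k\<in>{l<..N}. real N / (16 * P) * (1/2)^k)"
      by (rule sum_mono) (use cardWr in auto)
    also have "\<dots> = real N / (16 * P) * (\<Sum>k\<in>{l<..N}. (1/2)^k)" by (simp add: sum_distrib_left)
    also have "\<dots> \<le> real N / (16 * P) * 2"
      by (rule mult_left_mono) (use geom_le[of "{l<..N}"] P0 in auto)
    also have "\<dots> = real N / (8 * P)" by simp
    finally show ?thesis .
  qed
  have main: "real N / (4 * P) \<le> real (card (Eset r l \<inter> {1..N}))" if "8 * P \<le> N" for N
  proof -
    have "Vset P \<inter> {1..N} \<subseteq> ((Vset P \<inter> {1..N}) - Bad N) \<union> Bad N" by blast
    then have "card (Vset P \<inter> {1..N}) \<le> card (((Vset P \<inter> {1..N}) - Bad N) \<union> Bad N)"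
      by (rule card_mono[rotated]) (use finB in simp)
    also have "\<dots> \<le> card ((Vset P \<inter> {1..N}) - Bad N) + card (Bad N)" by (rule card_Un_le)
    also have "card ((Vset P \<inter> {1..N}) - Bad N) \<le> card (Eset r l \<inter> {1..N})"
      by (rule card_mono[OF _ sub]) simp
    finally have "card (Vset P \<inter> {1..N}) \<le> card (Eset r l \<inter> {1..N}) + card (Bad N)" by simp
    then have "real (card (Vset P \<inter> {1..N})) \<le> real (card (Eset r l \<inter> {1..N})) + real (card (Bad N))"
      by (metis of_nat_add of_nat_mono)
    moreover have "real N / (2*P) - 1 \<le> real (card (Vset P \<inter> {1..N}))" using card_V_lower[OF P0] by simp
    moreover note cardB[of N]
    moreover have "1 \<le> real N / (8 * P)" using that P0 by (simp add: le_divide_eq)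
    moreover have "real N / (2*P) = real N / (4 * P) + real N / (8 * P) + real N / (8 * P)"
      using P0 by (simp add: field_simps)
    ultimately show ?thesis by linarith
  qed
  show ?thesis
  proof (intro exI conjI)
    show "0 < 1 / (4 * real P)" using P0 by simp
    show "eventually (\<lambda>N. 1 / (4 * real P) * real N \<le> real (card (Eset r l \<inter> {1..N}))) sequentially"
      using eventually_ge_at_top[of "8 * P"] by eventually_elim (use main in simp)
  qed
qed



lemma blin_funpow: fixes T :: "'a::real_normed_vector \<Rightarrow> 'a" assumes bl: "bounded_linear T" shows "bounded_linear (T ^^ m)"
proof (induction m)
  case 0
  have "bounded_linear (\<lambda>x::'a. x)" by (rule bounded_linear_ident)
  then show ?case unfolding funpow.simps(1) id_def .
next
  case (Suc m)
  have "bounded_linear (\<lambda>x. T ((T ^^ m) x))" by (rule bounded_linear_compose[OF bl Suc.IH])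
  then show ?case unfolding funpow.simps(2) o_def .
qed

lemma dense_seq:
  fixes X0 :: "'a::metric_space set"
  assumes sep: "separable_space (euclidean::'a topology)" and dX: "closure X0 = UNIV"
  shows "\<exists>y::nat\<Rightarrow>'a. (\<forall>k. y k \<in> X0) \<and> (\<forall>u e K. e > 0 \<longrightarrow> (\<exists>k\<ge>K. dist (y k) u < e))"
proof -
  obtain C :: "'a set" where C: "countable C" "closure C = UNIV"
    using sep unfolding separable_space_def by auto
  have Cne: "C \<noteq> {}" using C by auto
  define c where "c = from_nat_into C"
  have ex: "\<exists>q. q \<in> X0 \<and> dist q (c i) < 1 / Suc j" for i j
  proof -
    have "(0::real) < 1 / Suc j" by simp
    then show ?thesis using closure_approachable[of "c i" X0] dX by blast
  qed
  define p where "p i j = (SOME q. q \<in> X0 \<and> dist q (c i) < 1 / Suc j)" for i j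
  have p: "p i j \<in> X0 \<and> dist (p i j) (c i) < 1 / Suc j" for i j
    unfolding p_def by (rule someI_ex[OF ex])
  define y where "y k = p (fst (prod_decode (fst (prod_decode k)))) (snd (prod_decode (fst (prod_decode k))))" for k
  show ?thesis
  proof (rule exI[where x=y], intro conjI allI impI)
    show "y k \<in> X0" for k unfolding y_def using p by blast
    fix u :: 'a and e :: real and K :: nat assume e: "0 < e"
    obtain j where j: "1 / real (Suc j) < e / 2" using e
      by (metis half_gt_zero_iff inverse_eq_divide reals_Archimedean)
    have "u \<in> closure C" using C by simp
    moreover have "0 < e/2" using e by simp
    ultimately obtain z where z: "z \<in> C" "dist z u < e/2" using closure_approachable[of u C] by blast
    obtain i where i: "c i = z" using from_nat_into_surj[OF C(1) z(1)] unfolding c_def by auto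
    define k where "k = prod_encode (prod_encode (i, j), K)"
    have "K \<le> k" unfolding k_def by (rule le_prod_encode_2)
    moreover have "y k = p i j" unfolding y_def k_def by simp
    moreover have "dist (c i) u < e/2" using z i by simp
    moreover have "dist (p i j) u < e"
      using \<open>dist (c i) u < e/2\<close> dist_triangle[of "p i j" u "c i"] p[of i j] j z i by linarith
    ultimately show "\<exists>k\<ge>K. dist (y k) u < e" by auto
  qed
qed

lemma decomp:
  fixes \<phi> :: "nat \<Rightarrow> 'a::comm_monoid_add"
  assumes disj: "\<And>l k. l \<noteq> k \<Longrightarrow> E l \<inter> E k = {}" and gt: "\<And>l n. n \<in> E l \<Longrightarrow> l < n"
    and out: "\<And>n. (\<forall>l. n \<notin> E l) \<Longrightarrow> \<phi> n = 0" and F: "F \<subseteq> {..<M}"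
  shows "sum \<phi> F = (\<Sum>l<M. sum \<phi> (F \<inter> E l))"
proof -
  have fin: "finite F" using F finite_subset by blast
  have "(\<Sum>l<M. sum \<phi> (F \<inter> E l)) = sum \<phi> (\<Union>l<M. F \<inter> E l)"
    by (rule sum.UNION_disjoint[symmetric]) (use fin disj in auto)
  also have "\<dots> = sum \<phi> F"
  proof (rule sum.mono_neutral_left)
    show "finite F" by (rule fin)
    show "(\<Union>l<M. F \<inter> E l) \<subseteq> F" by auto
    show "\<forall>i\<in>F - (\<Union>l<M. F \<inter> E l). \<phi> i = 0"
    proof
      fix i assume i: "i \<in> F - (\<Union>l<M. F \<inter> E l)"
      have "\<forall>l. i \<notin> E l"
      proof (intro allI notI)
        fix l assume "i \<in> E l"
        then have "l < M" using gt[of i l] i F by auto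
        then show False using i \<open>i \<in> E l\<close> by auto
      qed
      then show "\<phi> i = 0" by (rule out)
    qed
  qed
  finally show ?thesis ..
qed

theorem corollary2p3:
  fixes D :: "'a::banach set" and A :: "'a \<Rightarrow> 'a"
    and X0 :: "'a set" and B :: "'a \<Rightarrow> 'a" and T :: "'a \<Rightarrow> 'a"
  assumes sep: "separable_space (euclidean :: 'a topology)"
    and infdim: "\<not> (\<exists>S :: 'a set. finite S \<and> span S = UNIV)"
    and op: "linear_operator_on D A"
    and dense_dom: "closure D = UNIV"
    and closed_pow: "\<And>r. r \<ge> 1 \<Longrightarrow> closed_power D A r"
    and X0_sub: "X0 \<subseteq> (\<Inter>n. dom_pow D A n)"
    and X0_dense: "closure X0 = UNIV"
    and B_maps: "\<And>x. x \<in> X0 \<Longrightarrow> B x \<in> X0"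
    and AB: "\<And>x. x \<in> X0 \<Longrightarrow> A (B x) = x"
    and uncA: "\<And>x. x \<in> X0 \<Longrightarrow> unconditionally_convergent (\<lambda>n. (A ^^ n) x)"
    and uncB: "\<And>x. x \<in> X0 \<Longrightarrow> unconditionally_convergent (\<lambda>n. (B ^^ n) x)"
    and inj: "inj_on A D"
    and T_bounded: "bounded_linear T"
    and T_right: "\<And>x. T x \<in> D \<and> A (T x) = x"
    and T_left: "\<And>x. x \<in> D \<Longrightarrow> T (A x) = x"
  shows "frequently_hypercyclic UNIV T"
proof -
  have Apow_D: "(A^^n) y \<in> D" if "y \<in> X0" for y n
  proof -
    have "y \<in> dom_pow D A (Suc n)" using X0_sub that by blast
    then show ?thesis by simp
  qed
  have X0D: "X0 \<subseteq> D" using Apow_D[of _ 0] by auto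
  have TA: "(T^^m) ((A^^n) y) = (A^^(n-m)) y" if "y \<in> X0" "m \<le> n" for y n m
    using that(2)
  proof (induction m)
    case 0 then show ?case by simp
  next
    case (Suc m)
    then have IH: "(T^^m) ((A^^n) y) = (A^^(n-m)) y" by simp
    have e: "n - m = Suc (n - Suc m)" using Suc.prems by simp
    have "(T^^Suc m) ((A^^n) y) = T ((A^^(n-m)) y)" using IH by simp
    also have "\<dots> = T (A ((A^^(n - Suc m)) y))" unfolding e by simp
    also have "\<dots> = (A^^(n - Suc m)) y" using T_left Apow_D[OF that(1)] by blast
    finally show ?case .
  qed
  have TB: "(T^^j) y = (B^^j) y \<and> (B^^j) y \<in> X0" if "y \<in> X0" for y j
  proof (induction j)
    case 0 then show ?case using that by simp
  next
    case (Suc j)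
    define w where "w = (B^^j) y"
    have w: "w \<in> X0" "(T^^j) y = w" using Suc unfolding w_def by auto
    have "T w = T (A (B w))" using AB w by simp
    also have "\<dots> = B w" using T_left B_maps X0D w by blast
    finally show ?case using w B_maps unfolding w_def by simp
  qed
  have TAB: "(T^^m) ((A^^n) y) = (B^^(m-n)) y" if "y \<in> X0" "n < m" for y n m
  proof -
    have "(T^^m) = (T^^(m-n)) \<circ> (T^^n)" using that(2) by (metis funpow_add le_add_diff_inverse2 less_imp_le)
    then have "(T^^m) ((A^^n) y) = (T^^(m-n)) ((T^^n) ((A^^n) y))" by simp
    also have "\<dots> = (T^^(m-n)) y" using TA[OF that(1), of n n] by simp
    also have "\<dots> = (B^^(m-n)) y" using TB[OF that(1)] by simp
    finally show ?thesis .
  qed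
  obtain y :: "nat \<Rightarrow> 'a" where yX0: "\<And>k. y k \<in> X0" and ydense: "\<And>u e K. e > 0 \<Longrightarrow> \<exists>k\<ge>K. dist (y k) u < e"
    using dense_seq[OF sep X0_dense] by blast
  define NA where "NA l K = (SOME N. \<forall>F. finite F \<and> F \<subseteq> {N<..} \<longrightarrow> norm (\<Sum>k\<in>F. (A^^k) (y l)) < (1/2::real)^(K+l))" for l K
  define NB where "NB l K = (SOME N. \<forall>F. finite F \<and> F \<subseteq> {N<..} \<longrightarrow> norm (\<Sum>k\<in>F. (B^^k) (y l)) < (1/2::real)^(K+l))" for l K
  have NA: "norm (\<Sum>k\<in>F. (A^^k) (y l)) < (1/2)^(K+l)" if "finite F" "F \<subseteq> {NA l K<..}" for l K F
  proof -
    have "\<exists>N. \<forall>F. finite F \<and> F \<subseteq> {N<..} \<longrightarrow> norm (\<Sum>k\<in>F. (A^^k) (y l)) < (1/2::real)^(K+l)"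
      using uncA[OF yX0[of l]] unfolding unconditionally_convergent_def by simp
    from someI_ex[OF this] show ?thesis using that unfolding NA_def by blast
  qed
  have NB: "norm (\<Sum>k\<in>F. (B^^k) (y l)) < (1/2)^(K+l)" if "finite F" "F \<subseteq> {NB l K<..}" for l K F
  proof -
    have "\<exists>N. \<forall>F. finite F \<and> F \<subseteq> {N<..} \<longrightarrow> norm (\<Sum>k\<in>F. (B^^k) (y l)) < (1/2::real)^(K+l)"
      using uncB[OF yX0[of l]] unfolding unconditionally_convergent_def by simp
    from someI_ex[OF this] show ?thesis using that unfolding NB_def by blast
  qed
  define r where "r K = (\<Sum>l\<le>K. NA l K + NB l K)" for K
  have rle: "NA l K + NB l K \<le> r K" if "l \<le> K" for l K
    unfolding r_def by (rule member_le_sum) (use that in auto)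
  have rA: "norm (\<Sum>k\<in>F. (A^^k) (y l)) < (1/2)^(K+l)" if "l \<le> K" "finite F" "F \<subseteq> {r K<..}" for l K F
  proof -
    have "F \<subseteq> {NA l K<..}" using rle[OF that(1)] that(3) by force
    then show ?thesis by (rule NA[OF that(2)])
  qed
  have rB: "norm (\<Sum>k\<in>F. (B^^k) (y l)) < (1/2)^(K+l)" if "l \<le> K" "finite F" "F \<subseteq> {r K<..}" for l K F
  proof -
    have "F \<subseteq> {NB l K<..}" using rle[OF that(1)] that(3) by force
    then show ?thesis by (rule NB[OF that(2)])
  qed
  define E where "E = Eset r"
  have Edisj: "\<And>l k. l \<noteq> k \<Longrightarrow> E l \<inter> E k = {}" unfolding E_def by (rule Eset_disj)
  have Egt: "\<And>l n. n \<in> E l \<Longrightarrow> l < n \<and> r l < n" unfolding E_def by (rule Eset_gt)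
  have Esep: "\<And>n l m k. n \<in> E l \<Longrightarrow> m \<in> E k \<Longrightarrow> m < n \<Longrightarrow> r (max l k) < n - m"
    unfolding E_def by (rule Eset_sep)
  define lab where "lab n = (SOME l. n \<in> E l)" for n
  define f where "f n = (if (\<exists>l. n \<in> E l) then (A^^n) (y (lab n)) else 0)" for n
  have f_E: "f n = (A^^n) (y l)" if "n \<in> E l" for n l
  proof -
    have "n \<in> E (lab n)" unfolding lab_def using that by (rule someI)
    then have "lab n = l" using Edisj that by blast
    then show ?thesis unfolding f_def using that by auto
  qed
  have f_out: "f n = 0" if "\<forall>l. n \<notin> E l" for n using that unfolding f_def by auto
  have fsum: "summable f"
    unfolding summable_Cauchy
  proof (intro allI impI)
    fix e :: real assume e: "0 < e"
    obtain K where K: "(1/2::real)^K < e/2" using real_arch_pow_inv[of "e/2" "1/2"] e by auto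
    show "\<exists>N. \<forall>m\<ge>N. \<forall>n. norm (sum f {m..<n}) < e"
    proof (intro exI allI impI)
      fix m n assume m: "Suc (r K) \<le> m"
      have dec: "sum f {m..<n} = (\<Sum>l<n. sum f ({m..<n} \<inter> E l))"
        by (rule decomp[where E=E]) (use Edisj Egt f_out in auto)
      have bnd: "norm (sum f ({m..<n} \<inter> E l)) \<le> (1/2)^(K+l)" for l
      proof -
        have eq: "sum f ({m..<n} \<inter> E l) = (\<Sum>k\<in>{m..<n} \<inter> E l. (A^^k) (y l))"
          by (rule sum.cong) (auto simp: f_E)
        show ?thesis
        proof (cases "l \<le> K")
          case True
          have "{m..<n} \<inter> E l \<subseteq> {r K<..}" using m by auto
          then show ?thesis using rA[OF True, of "{m..<n} \<inter> E l"] unfolding eq by simp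
        next
          case False
          have "{m..<n} \<inter> E l \<subseteq> {r l<..}" using Egt by auto
          then have "norm (sum f ({m..<n} \<inter> E l)) < (1/2)^(l+l)"
            using rA[of l l "{m..<n} \<inter> E l"] unfolding eq by simp
          moreover have "(1/2::real)^(l+l) \<le> (1/2)^(K+l)"
            using False by (intro power_decreasing) auto
          ultimately show ?thesis by linarith
        qed
      qed
      have "norm (sum f {m..<n}) \<le> (\<Sum>l<n. norm (sum f ({m..<n} \<inter> E l)))"
        unfolding dec by (rule norm_sum)
      also have "\<dots> \<le> (\<Sum>l<n. (1/2::real)^(K+l))" by (rule sum_mono) (rule bnd)
      also have "\<dots> = (1/2)^K * (\<Sum>l<n. (1/2::real)^l)" by (simp add: power_add sum_distrib_left)
      also have "\<dots> \<le> (1/2)^K * 2" by (rule mult_left_mono) (use geom_le in auto)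
      also have "\<dots> < e" using K by simp
      finally show "norm (sum f {m..<n}) < e" .
    qed
  qed
  define x where "x = suminf f"
  have est: "norm ((T^^m) x - y k) \<le> 4 * (1/2)^k" if mk: "m \<in> E k" for m k
  proof -
    let ?S = "T ^^ m"
    have bl: "bounded_linear ?S" by (rule blin_funpow[OF T_bounded])
    have Sx: "?S x = (\<Sum>n. ?S (f n))" unfolding x_def by (rule bounded_linear.suminf[OF bl fsum])
    have sS: "summable (\<lambda>n. ?S (f n))" by (rule bounded_linear.summable[OF bl fsum])
    have Sfm: "?S (f m) = y k" using f_E[OF mk] TA[OF yX0[of k], of m m] by simp
    have S0: "?S 0 = 0" using bl by (simp add: linear_simps)
    define h where "h n = (if n = m then 0 else ?S (f n))" for n
    have h_eq: "h = (\<lambda>n. ?S (f n) - (if n = m then ?S (f m) else 0))" unfolding h_def by auto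
    have hs: "h sums ((\<Sum>n. ?S (f n)) - ?S (f m))"
      unfolding h_eq by (rule sums_diff[OF summable_sums[OF sS] sums_single])
    then have hsum: "summable h" by (rule sums_summable)
    have hval: "suminf h = ?S x - y k" using sums_unique[OF hs] Sx Sfm by simp
    have part: "norm (sum h {..<M}) \<le> 4 * (1/2)^k" for M
    proof -
      have dec: "sum h {..<M} = (\<Sum>l<M. sum h ({..<M} \<inter> E l))"
        by (rule decomp[where E=E]) (use Edisj Egt f_out S0 in \<open>auto simp: h_def\<close>)
      have bl_l: "norm (sum h ({..<M} \<inter> E l)) \<le> 2 * (1/2)^(k+l)" for l
      proof -
        define G where "G = {..<M} \<inter> E l"
        define G1 where "G1 = {n\<in>G. m < n}"
        define G2 where "G2 = {n\<in>G. n < m}"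
        have finG: "finite G" unfolding G_def by simp
        have fin1: "finite G1" "finite G2" unfolding G1_def G2_def by (rule finite_subset[OF _ finG], blast)+
        have "sum h G = sum h (G1 \<union> G2)"
          by (rule sum.mono_neutral_right) (auto simp: G1_def G2_def finG h_def)
        also have "\<dots> = sum h G1 + sum h G2"
          by (rule sum.union_disjoint[OF fin1]) (auto simp: G1_def G2_def)
        finally have sp: "sum h G = sum h G1 + sum h G2" .
        have mm: "(1/2::real)^(max l k + l) \<le> (1/2)^(k+l)" by (intro power_decreasing) auto
        have inj1: "inj_on (\<lambda>n. n - m) G1" unfolding G1_def inj_on_def by auto
        have "sum h G1 = (\<Sum>n\<in>G1. (A^^(n - m)) (y l))"
          by (rule sum.cong) (auto simp: G1_def G_def h_def f_E TA[OF yX0])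
        also have "\<dots> = (\<Sum>j\<in>(\<lambda>n. n - m) ` G1. (A^^j) (y l))"
          by (rule sum.reindex[OF inj1, symmetric, unfolded o_def])
        finally have e1: "sum h G1 = (\<Sum>j\<in>(\<lambda>n. n - m) ` G1. (A^^j) (y l))" .
        have "(\<lambda>n. n - m) ` G1 \<subseteq> {r (max l k)<..}"
          using Esep mk unfolding G1_def G_def by fastforce
        then have n1: "norm (sum h G1) < (1/2)^(max l k + l)"
          unfolding e1 by (intro rA) (use fin1 in auto)
        have inj2: "inj_on (\<lambda>n. m - n) G2" unfolding G2_def inj_on_def by auto
        have "sum h G2 = (\<Sum>n\<in>G2. (B^^(m - n)) (y l))"
          by (rule sum.cong) (auto simp: G2_def G_def h_def f_E TAB[OF yX0])
        also have "\<dots> = (\<Sum>j\<in>(\<lambda>n. m - n) ` G2. (B^^j) (y l))"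
          by (rule sum.reindex[OF inj2, symmetric, unfolded o_def])
        finally have e2: "sum h G2 = (\<Sum>j\<in>(\<lambda>n. m - n) ` G2. (B^^j) (y l))" .
        have "(\<lambda>n. m - n) ` G2 \<subseteq> {r (max l k)<..}"
          using Esep mk unfolding G2_def G_def by (fastforce simp: max.commute)
        then have n2: "norm (sum h G2) < (1/2)^(max l k + l)"
          unfolding e2 by (intro rB) (use fin1 in auto)
        have "norm (sum h G) \<le> norm (sum h G1) + norm (sum h G2)" unfolding sp by (rule norm_triangle_ineq)
        then show ?thesis using n1 n2 mm unfolding G_def by linarith
      qed
      have "norm (sum h {..<M}) \<le> (\<Sum>l<M. norm (sum h ({..<M} \<inter> E l)))"
        unfolding dec by (rule norm_sum)
      also have "\<dots> \<le> (\<Sum>l<M. 2 * (1/2::real)^(k+l))" by (rule sum_mono) (rule bl_l)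
      also have "\<dots> = 2 * (1/2)^k * (\<Sum>l<M. (1/2::real)^l)" by (simp add: power_add sum_distrib_left mult.assoc)
      also have "\<dots> \<le> 2 * (1/2)^k * 2" by (rule mult_left_mono) (use geom_le in auto)
      also have "\<dots> = 4 * (1/2)^k" by simp
      finally show ?thesis .
    qed
    have "norm (suminf h) \<le> 4 * (1/2)^k"
      by (rule LIMSEQ_le_const2[OF tendsto_norm[OF summable_LIMSEQ[OF hsum]]]) (use part in auto)
    then show ?thesis using hval by simp
  qed
  show ?thesis
    unfolding frequently_hypercyclic_def
  proof (intro bexI conjI allI impI)
    fix U :: "'a set" assume U: "open U \<and> U \<noteq> {}"
    then obtain u where u: "u \<in> U" by auto
    then obtain e where e: "0 < e" "ball u e \<subseteq> U" using U open_contains_ball by blast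
    obtain K where K: "(1/2::real)^K < e/8" using real_arch_pow_inv[of "e/8" "1/2"] e by auto
    have "0 < e/2" using e by simp
    then obtain k where k: "K \<le> k" "dist (y k) u < e/2" using ydense[where u=u and e="e/2" and K=K] by blast
    have "(1/2::real)^k \<le> (1/2)^K" using k by (intro power_decreasing) auto
    then have k4: "4 * (1/2::real)^k < e/2" using K by linarith
    have sub: "E k \<subseteq> {n. (T^^n) x \<in> U}"
    proof
      fix m assume m: "m \<in> E k"
      have "dist ((T^^m) x) (y k) \<le> 4 * (1/2)^k" using est[OF m] by (simp add: dist_norm)
      then have "dist ((T^^m) x) u < e" using k(2) k4 dist_triangle[of "(T^^m) x" u "y k"] by linarith
      then show "m \<in> {n. (T^^n) x \<in> U}" using e(2) by (auto simp: dist_commute)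
    qed
    obtain c where c: "0 < c" "eventually (\<lambda>N. c * real N \<le> real (card (E k \<inter> {1..N}))) sequentially"
      using Eset_density[of r k] unfolding E_def by blast
    have "eventually (\<lambda>N. ereal c \<le> ereal (real (card ({n. (T^^n) x \<in> U} \<inter> {1..N})) / real N)) sequentially"
      using c(2) eventually_ge_at_top[of 1]
    proof eventually_elim
      case (elim N)
      have "card (E k \<inter> {1..N}) \<le> card ({n. (T^^n) x \<in> U} \<inter> {1..N})"
        by (rule card_mono) (use sub in auto)
      then have "c * real N \<le> real (card ({n. (T^^n) x \<in> U} \<inter> {1..N}))" using elim(1) by linarith
      then show ?case using elim(2) by (simp add: pos_le_divide_eq)
    qed
    then have "ereal c \<le> lower_density {n. (T^^n) x \<in> U}"
      unfolding lower_density_def by (rule Liminf_bounded)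
    then show "0 < lower_density {n. (T^^n) x \<in> U}" using c(1) by (metis ereal_less(2) less_le_trans)
  qed auto
qed


end
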